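(* Let $T$ be a square-integrable real random variable and $X=(X_s)_{s\in\mathbb{S}}$ a finite family of random variables (features), and let $f$ be a measurable function with $f(X)=E[T\mid X]$ almost surely. For $S\subseteq\mathbb{S}$ write $X_S=(X_s)_{s\in S}$ and define, for a realisation $(x,t)$ of $(X,T)$, the value function $w_{f(x),t}(S)=\bigl(t-v_{f(x)}(S)\bigr)^2$, where $v_{f(x)}(S)=E[f(X)\mid X_s=x_s,\ s\in S]$, and set $\varphi_j(f,x,t,S)=w_{f(x),t}(S\cup\{j\})-w_{f(x),t}(S)$. Let $\pi$ be a permutation of $\mathbb{S}$, let $j\in\mathbb{S}$ and $R_j=\{i:\pi(i)<\pi(j)\}$. Then $$-E\bigl[\varphi_j(f,X,T,R_j)\bigr]=L_T(X_j)+W_T(X_j;X_{R_j}),$$ where for families of random variables $A,B$: $L_T(A)=\sigma^2(T)-\sigma^2\bigl(T-E[T\mid A]\bigr)$ and $W_T(A;B)=L_T(A,B)-L_T(A)-L_T(B)$ (with $L_T$ of the empty family equal to $0$).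
   Context: $\sigma^2$ denotes variance. $L_T(A,B)$ means $L_T$ applied to the combined family of variables $A$ and $B$. The paper's analysis assumes the model equals (approximately) the conditional expectation of the target, $f(X)\approx E[T\mid X]$, as obtained from mean-squared-error regression. *)

theory Defs
  imports "HOL-Probability.Probability"
begin

definition gen_sa :: "'a measure \<Rightarrow> ('s \<Rightarrow> 'a \<Rightarrow> 'b) \<Rightarrow> ('s \<Rightarrow> 'b measure) \<Rightarrow> 's set \<Rightarrow> 'a measure" where
  "gen_sa M X N S = sigma (space M) (\<Union>s\<in>S. {X s -` A \<inter> space M | A. A \<in> sets (N s)})"

definition cexp :: "'a measure \<Rightarrow> ('s \<Rightarrow> 'a \<Rightarrow> 'b) \<Rightarrow> ('s \<Rightarrow> 'b measure) \<Rightarrow> 's set \<Rightarrow> ('a \<Rightarrow> real) \<Rightarrow> 'a \<Rightarrow> real" where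
  "cexp M X N S Y = real_cond_exp M (gen_sa M X N S) Y"

definition var :: "'a measure \<Rightarrow> ('a \<Rightarrow> real) \<Rightarrow> real" where
  "var M Y = (LINT \<omega>|M. (Y \<omega> - (LINT \<eta>|M. Y \<eta>))\<^sup>2)"

definition LT :: "'a measure \<Rightarrow> ('s \<Rightarrow> 'a \<Rightarrow> 'b) \<Rightarrow> ('s \<Rightarrow> 'b measure) \<Rightarrow> ('a \<Rightarrow> real) \<Rightarrow> 's set \<Rightarrow> real" where
  "LT M X N T S = (if S = {} then 0 else var M T - var M (\<lambda>\<omega>. T \<omega> - cexp M X N S T \<omega>))"

definition WT :: "'a measure \<Rightarrow> ('s \<Rightarrow> 'a \<Rightarrow> 'b) \<Rightarrow> ('s \<Rightarrow> 'b measure) \<Rightarrow> ('a \<Rightarrow> real) \<Rightarrow> 's set \<Rightarrow> 's set \<Rightarrow> real" where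
  "WT M X N T A B = LT M X N T (A \<union> B) - LT M X N T A - LT M X N T B"

definition Xvec :: "'s set \<Rightarrow> ('s \<Rightarrow> 'a \<Rightarrow> 'b) \<Rightarrow> 'a \<Rightarrow> ('s \<Rightarrow> 'b)" where
  "Xvec SS X \<omega> = restrict (\<lambda>s. X s \<omega>) SS"

text \<open>Value function v_{f(x)}(S) = E[f(X) | X_S = x_S], evaluated at x = X(omega).\<close>
definition vfun :: "'a measure \<Rightarrow> 's set \<Rightarrow> ('s \<Rightarrow> 'a \<Rightarrow> 'b) \<Rightarrow> ('s \<Rightarrow> 'b measure) \<Rightarrow> (('s \<Rightarrow> 'b) \<Rightarrow> real) \<Rightarrow> 's set \<Rightarrow> 'a \<Rightarrow> real" where
  "vfun M SS X N f S = cexp M X N S (\<lambda>\<omega>. f (Xvec SS X \<omega>))"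

text \<open>w_{f(x),t}(S) = (t - v_{f(x)}(S))^2 at (x,t) = (X(omega), T(omega)).\<close>
definition wfun :: "'a measure \<Rightarrow> 's set \<Rightarrow> ('s \<Rightarrow> 'a \<Rightarrow> 'b) \<Rightarrow> ('s \<Rightarrow> 'b measure) \<Rightarrow> (('s \<Rightarrow> 'b) \<Rightarrow> real) \<Rightarrow> ('a \<Rightarrow> real) \<Rightarrow> 's set \<Rightarrow> 'a \<Rightarrow> real" where
  "wfun M SS X N f T S \<omega> = (T \<omega> - vfun M SS X N f S \<omega>)\<^sup>2"

definition phi :: "'a measure \<Rightarrow> 's set \<Rightarrow> ('s \<Rightarrow> 'a \<Rightarrow> 'b) \<Rightarrow> ('s \<Rightarrow> 'b measure) \<Rightarrow> (('s \<Rightarrow> 'b) \<Rightarrow> real) \<Rightarrow> ('a \<Rightarrow> real) \<Rightarrow> 's \<Rightarrow> 's set \<Rightarrow> 'a \<Rightarrow> real" where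
  "phi M SS X N f T j S \<omega> = wfun M SS X N f T (S \<union> {j}) \<omega> - wfun M SS X N f T S \<omega>"

end

theory Submission
  imports Defs
begin

lemma gen_sa_space: "space (gen_sa M X N S) = space M"
  unfolding gen_sa_def by (rule space_measure_of) auto

lemma gen_sa_sets: "sets (gen_sa M X N S) = sigma_sets (space M) (\<Union>s\<in>S. {X s -` A \<inter> space M | A. A \<in> sets (N s)})"
  unfolding gen_sa_def by (rule sets_measure_of) auto

lemma gen_sa_subalg:
  assumes "S \<subseteq> SS" "\<And>s. s \<in> SS \<Longrightarrow> X s \<in> measurable M (N s)"
  shows "subalgebra M (gen_sa M X N S)"
  unfolding subalgebra_def gen_sa_space gen_sa_sets
proof (intro conjI refl)
  show "sigma_sets (space M) (\<Union>s\<in>S. {X s -` A \<inter> space M | A. A \<in> sets (N s)}) \<subseteq> sets M"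
    apply (rule sigma_algebra.sigma_sets_subset[OF sets.sigma_algebra_axioms])
    using assms by (auto intro!: measurable_sets)
qed

lemma gen_sa_nested:
  assumes "S \<subseteq> S'"
  shows "subalgebra (gen_sa M X N S') (gen_sa M X N S)"
  unfolding subalgebra_def gen_sa_space gen_sa_sets
  apply (intro conjI refl)
  apply (rule sigma_sets_mono')
  using assms by auto

lemma abs_le_sq: "\<bar>x::real\<bar> \<le> 1 + x\<^sup>2"
proof (cases "\<bar>x\<bar> \<le> 1")
  case False
  then have "\<bar>x\<bar> * 1 \<le> \<bar>x\<bar> * \<bar>x\<bar>" by (intro mult_left_mono) auto
  then show ?thesis by (simp add: power2_eq_square abs_mult[symmetric])
qed (use zero_le_power2[of x] in linarith)

lemma diff_sq_le: "(a - b)\<^sup>2 \<le> 2 * (a::real)\<^sup>2 + 2 * b\<^sup>2"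
proof -
  have "0 \<le> (a + b)\<^sup>2" by simp
  then show ?thesis by (simp add: power2_eq_square algebra_simps)
qed

lemma main_lemma:
  fixes M :: "'a measure" and SS :: "'s set" and X :: "'s \<Rightarrow> 'a \<Rightarrow> 'b"
    and N :: "'s \<Rightarrow> 'b measure" and T :: "'a \<Rightarrow> real" and f :: "('s \<Rightarrow> 'b) \<Rightarrow> real"
  assumes P: "prob_space M"
    and Tm: "T \<in> borel_measurable M" and T2: "integrable M (\<lambda>\<omega>. (T \<omega>)\<^sup>2)"
    and Xm: "\<And>s. s \<in> SS \<Longrightarrow> X s \<in> measurable M (N s)"
    and fm: "f \<in> borel_measurable (PiM SS N)"
    and fae: "AE \<omega> in M. f (Xvec SS X \<omega>) = cexp M X N SS T \<omega>"
    and S: "S \<subseteq> SS"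
  shows "integrable M (wfun M SS X N f T S)"
    "LT M X N T S = var M T - (LINT \<omega>|M. wfun M SS X N f T S \<omega>)"
proof -
  interpret prob_space M by (rule P)
  define F where "F = gen_sa M X N S"
  define G where "G = gen_sa M X N SS"
  have subF: "subalgebra M F" unfolding F_def using gen_sa_subalg[of S SS X M N] S Xm by blast
  have subG: "subalgebra M G" unfolding G_def using gen_sa_subalg[of SS SS X M N] Xm by blast
  have subGF: "subalgebra G F" unfolding F_def G_def by (rule gen_sa_nested[OF S])
  interpret F: finite_measure_subalgebra M F by unfold_locales (rule subF)
  interpret G: finite_measure_subalgebra M G by unfold_locales (rule subG)
  have Tint: "integrable M T"
    apply (rule Bochner_Integration.integrable_bound[of _ "\<lambda>x. 1 + (T x)\<^sup>2"])
    using T2 Tm by (auto intro!: Bochner_Integration.integrable_add simp: abs_le_sq)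
  have Xvm: "Xvec SS X \<in> measurable M (PiM SS N)"
    unfolding Xvec_def by (rule measurable_restrict) (rule Xm)
  have fXm: "(\<lambda>\<omega>. f (Xvec SS X \<omega>)) \<in> borel_measurable M"
    using measurable_comp[OF Xvm fm] by (simp add: comp_def)
  define c where "c = real_cond_exp M F T"
  have cm: "c \<in> borel_measurable M" unfolding c_def by (rule borel_measurable_cond_exp2)
  have cint: "integrable M c" unfolding c_def by (rule F.real_cond_exp_int(1)[OF Tint])
  have cE: "(LINT \<omega>|M. c \<omega>) = (LINT \<omega>|M. T \<omega>)" unfolding c_def by (rule F.real_cond_exp_int(2)[OF Tint])
  have c2: "integrable M (\<lambda>\<omega>. (c \<omega>)\<^sup>2)"
    unfolding c_def
    apply (rule F.integrable_convex_cond_exp[of T UNIV _ _ "\<lambda>x. x\<^sup>2"])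
    using Tint T2 by (auto intro: convex_on_realI simp: convex_power2)
  have vae: "AE \<omega> in M. vfun M SS X N f S \<omega> = c \<omega>"
  proof -
    have "AE \<omega> in M. real_cond_exp M F (\<lambda>\<omega>. f (Xvec SS X \<omega>)) \<omega> = real_cond_exp M F (real_cond_exp M G T) \<omega>"
      apply (rule F.real_cond_exp_cong)
      using fae fXm by (auto simp: cexp_def G_def)
    moreover have "AE \<omega> in M. real_cond_exp M F (real_cond_exp M G T) \<omega> = c \<omega>"
      unfolding c_def by (rule F.real_cond_exp_nested_subalg[OF subG subGF Tint])
    ultimately show ?thesis unfolding vfun_def cexp_def F_def by auto
  qed
  have wm: "wfun M SS X N f T S \<in> borel_measurable M"
    unfolding wfun_def[abs_def] vfun_def cexp_def using Tm by measurable
  have dint: "integrable M (\<lambda>\<omega>. (T \<omega> - c \<omega>)\<^sup>2)"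
    apply (rule Bochner_Integration.integrable_bound[of _ "\<lambda>x. 2 * (T x)\<^sup>2 + 2 * (c x)\<^sup>2"])
    using T2 c2 Tm cm by (auto intro!: Bochner_Integration.integrable_add simp: diff_sq_le)
  have wae: "AE \<omega> in M. wfun M SS X N f T S \<omega> = (T \<omega> - c \<omega>)\<^sup>2"
    using vae by (auto simp: wfun_def)
  show wint: "integrable M (wfun M SS X N f T S)"
    using integrable_cong_AE[OF wm _ wae] dint Tm cm by auto
  have wI: "(LINT \<omega>|M. wfun M SS X N f T S \<omega>) = (LINT \<omega>|M. (T \<omega> - c \<omega>)\<^sup>2)"
    by (rule integral_cong_AE[OF wm _ wae]) (use Tm cm in auto)
  show "LT M X N T S = var M T - (LINT \<omega>|M. wfun M SS X N f T S \<omega>)"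
  proof (cases "S = {}")
    case False
    have "(LINT \<omega>|M. T \<omega> - c \<omega>) = 0" using cE Tint cint by simp
    then have "var M (\<lambda>\<omega>. T \<omega> - cexp M X N S T \<omega>) = (LINT \<omega>|M. (T \<omega> - c \<omega>)\<^sup>2)"
      unfolding var_def cexp_def c_def F_def by simp
    then show ?thesis using False wI unfolding LT_def by simp
  next
    case True
    have sF: "sets F = {{}, space M}"
      unfolding F_def gen_sa_sets True by (simp add: sigma_sets_empty_eq)
    obtain \<omega>0 where w0: "\<omega>0 \<in> space M" using not_empty by blast
    have cF: "c \<in> borel_measurable F" unfolding c_def by (rule borel_measurable_cond_exp)
    have spF: "space F = space M" unfolding F_def by (rule gen_sa_space)
    have "c -` {c \<omega>0} \<inter> space F \<in> sets F" using cF by (rule measurable_sets) auto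
    moreover have "\<omega>0 \<in> c -` {c \<omega>0} \<inter> space F" using w0 spF by auto
    ultimately have "c -` {c \<omega>0} \<inter> space F = space M" using sF by auto
    then have cc: "\<And>\<omega>. \<omega> \<in> space M \<Longrightarrow> c \<omega> = c \<omega>0" using spF by auto
    have "(LINT \<omega>|M. c \<omega>) = (LINT \<omega>|M. c \<omega>0)"
      by (rule Bochner_Integration.integral_cong[OF refl]) (rule cc)
    then have "(LINT \<omega>|M. c \<omega>) = c \<omega>0" using prob_space by simp
    then have cc2: "\<And>\<omega>. \<omega> \<in> space M \<Longrightarrow> c \<omega> = (LINT \<omega>|M. T \<omega>)" using cc cE by simp
    have "(LINT \<omega>|M. (T \<omega> - c \<omega>)\<^sup>2) = var M T"
      unfolding var_def by (rule Bochner_Integration.integral_cong) (auto simp: cc2)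
    then show ?thesis using True wI unfolding LT_def by simp
  qed
qed

theorem proposition1:
  fixes M :: "'a measure" and SS :: "'s set" and X :: "'s \<Rightarrow> 'a \<Rightarrow> 'b"
    and N :: "'s \<Rightarrow> 'b measure" and T :: "'a \<Rightarrow> real" and f :: "('s \<Rightarrow> 'b) \<Rightarrow> real"
    and \<pi> :: "'s \<Rightarrow> nat" and j :: 's
  assumes "prob_space M"
    and "T \<in> borel_measurable M" and "integrable M (\<lambda>\<omega>. (T \<omega>)\<^sup>2)"
    and "finite SS"
    and "\<And>s. s \<in> SS \<Longrightarrow> X s \<in> measurable M (N s)"
    and "f \<in> borel_measurable (PiM SS N)"
    and "AE \<omega> in M. f (Xvec SS X \<omega>) = cexp M X N SS T \<omega>"
    and "bij_betw \<pi> SS {..<card SS}"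
    and "j \<in> SS"
  shows "- (LINT \<omega>|M. phi M SS X N f T j {i \<in> SS. \<pi> i < \<pi> j} \<omega>)
           = LT M X N T {j} + WT M X N T {j} {i \<in> SS. \<pi> i < \<pi> j}"
proof -
  define R where "R = {i \<in> SS. \<pi> i < \<pi> j}"
  have R: "R \<subseteq> SS" and R': "R \<union> {j} \<subseteq> SS" using assms(9) unfolding R_def by auto
  have A1: "integrable M (wfun M SS X N f T S)" if "S \<subseteq> SS" for S
    by (rule main_lemma(1)) (use assms that in auto)
  have A2: "LT M X N T S = var M T - (LINT \<omega>|M. wfun M SS X N f T S \<omega>)" if "S \<subseteq> SS" for S
    by (rule main_lemma(2)) (use assms that in auto)
  have "(LINT \<omega>|M. phi M SS X N f T j R \<omega>)
      = (LINT \<omega>|M. wfun M SS X N f T (R \<union> {j}) \<omega>) - (LINT \<omega>|M. wfun M SS X N f T R \<omega>)"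
    unfolding phi_def using A1[OF R] A1[OF R'] by simp
  then show ?thesis using A2[OF R] A2[OF R'] unfolding R_def[symmetric] WT_def
    by (simp add: Un_commute)
qed

end
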